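(* Let $\theta$ be a renormalised labelled tree (as defined below) such that $\Psi_{n_\ell}(\omega\cdot\nu_\ell)\neq0$ for every line $\ell$ of $\theta$ with $n_\ell\ge0$ (this holds in particular whenever the value of $\theta$ is non-zero). Then for every $n\ge0$, $$\mathfrak{N}_n(\theta)\le 2^{-(m_n-2)}K(\theta),$$ where $\mathfrak{N}_n(\theta)$ is the number of lines of $\theta$ with scale $\ge n$ and $K(\theta):=\sum_{v}|\nu_v|$, the sum running over all nodes of $\theta$.
   Context: Notation: $\omega\in\mathbb{R}^d$ satisfies the Bryuno condition; $\alpha_m(\omega):=\inf_{0<|\nu|\le2^m}|\omega\cdot\nu|$ with $|\nu|$ the $\ell^1$ norm; $m_0=0$, $m_{n+1}=m_n+p_n+1$ with $p_n:=\max\{q\ge0:\alpha_{m_n}(\omega)<2\alpha_{m_n+q}(\omega)\}$. $\chi$ is an even $C^\infty$ function, non-increasing in $|x|$, equal to $1$ for $|x|\le1/2$ and $0$ for $|x|\ge1$; $\chi_{-1}\equiv1$, $\chi_n(x)=\chi(4x/\alpha_{m_n}(\omega))$, $\psi_n=1-\chi_n$ ($n\ge0$), $\Psi_n=\chi_{n-1}\psi_n$ ($n\ge0$); thus $\Psi_n(x)\neq0$ implies $\alpha_{m_n}(\omega)/8<|x|<\alpha_{m_{n-1}}(\omega)/4$ (with $\alpha_{m_{-1}}:=+\infty$). Trees: a tree $\theta$ is a finite rooted tree whose root has exactly one incident line (the root line); all other vertices are nodes; lines are oriented toward the root, and each line $\ell=\ell_v$ is identified with the node $v$ it leaves. Write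 $w\preceq v$ if $v$ lies on the path from $w$ to the root. Each node $v$ carries a mode $\nu_v\in\mathbb{Z}^d$; each line $\ell_v$ carries the momentum $\nu_{\ell_v}=\sum_{w\preceq v}\nu_w$, required to be nonzero for all lines except possibly the root line; each line carries a scale $n_\ell$, with $n_\ell=-1$ if $\nu_\ell=0$ and $n_\ell\in\{0,1,2,\dots\}$ otherwise. A cluster on scale $n$ is a maximal connected subgraph (set of nodes together with the lines of $\theta$ joining them) all of whose lines have scale $\le n$ and at least one line of which has scale $n$; a line enters (exits) a subgraph $T$ if it connects a node outside $T$ to a node in $T$ (a node in $T$ to a node outside). A self-energy cluster is either a cluster with exactly one entering line $\ell'$ and one exiting line $\ell$ satisfying $\nu_\ell=\nu_{\ell'}$, or (scale $-1$) a single node $v$ with $\nu_v=0$ having exactly one entering line. A tree is renormalised if it contains no self-energy clusters. *)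

theory Defs
  imports "HOL-Analysis.Analysis"
begin

text \<open>Vectors in R^d / Z^d are functions on a finite index type 'd (d = CARD('d)).\<close>

definition dotp :: "('d::finite \<Rightarrow> real) \<Rightarrow> ('d \<Rightarrow> int) \<Rightarrow> real" where
  "dotp \<omega> \<nu> = (\<Sum>i\<in>UNIV. \<omega> i * of_int (\<nu> i))"

definition norm1 :: "('d::finite \<Rightarrow> int) \<Rightarrow> int" where
  "norm1 \<nu> = (\<Sum>i\<in>UNIV. \<bar>\<nu> i\<bar>)"

definition alpha :: "('d::finite \<Rightarrow> real) \<Rightarrow> nat \<Rightarrow> real" where
  "alpha \<omega> m = Inf {\<bar>dotp \<omega> \<nu>\<bar> | \<nu>. \<nu> \<noteq> (\<lambda>_. 0) \<and> norm1 \<nu> \<le> 2 ^ m}"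

definition bryuno :: "('d::finite \<Rightarrow> real) \<Rightarrow> bool" where
  "bryuno \<omega> \<longleftrightarrow> (\<forall>m. alpha \<omega> m > 0) \<and>
     summable (\<lambda>m. (1/2) ^ m * ln (1 / alpha \<omega> m))"

definition pexp :: "('d::finite \<Rightarrow> real) \<Rightarrow> nat \<Rightarrow> nat" where
  "pexp \<omega> k = Max {q. alpha \<omega> k < 2 * alpha \<omega> (k + q)}"

fun mseq :: "('d::finite \<Rightarrow> real) \<Rightarrow> nat \<Rightarrow> nat" where
  "mseq \<omega> 0 = 0"
| "mseq \<omega> (Suc n) = mseq \<omega> n + pexp \<omega> (mseq \<omega> n) + 1"

definition cutoff :: "(real \<Rightarrow> real) \<Rightarrow> bool" where
  "cutoff chi \<longleftrightarrow> (\<forall>x. chi (- x) = chi x)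
     \<and> (\<forall>k x. (deriv ^^ k) chi differentiable (at x))
     \<and> (\<forall>x y. \<bar>x\<bar> \<le> \<bar>y\<bar> \<longrightarrow> chi y \<le> chi x)
     \<and> (\<forall>x. \<bar>x\<bar> \<le> 1/2 \<longrightarrow> chi x = 1)
     \<and> (\<forall>x. \<bar>x\<bar> \<ge> 1 \<longrightarrow> chi x = 0)"

text \<open>chi_n for n \<ge> 0 (chi_{-1} = 1 is handled in Psi), psi_n = 1 - chi_n, Psi_n = chi_{n-1} psi_n.\<close>
definition chin :: "(real \<Rightarrow> real) \<Rightarrow> ('d::finite \<Rightarrow> real) \<Rightarrow> nat \<Rightarrow> real \<Rightarrow> real" where
  "chin chi \<omega> n x = chi (4 * x / alpha \<omega> (mseq \<omega> n))"

definition Psi :: "(real \<Rightarrow> real) \<Rightarrow> ('d::finite \<Rightarrow> real) \<Rightarrow> nat \<Rightarrow> real \<Rightarrow> real" where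
  "Psi chi \<omega> n x = (if n = 0 then 1 else chin chi \<omega> (n - 1) x) * (1 - chin chi \<omega> n x)"

text \<open>A tree is given by its finite set of nodes V and a parent map par:
  par v = Some w means the line l_v goes from v to the node w; par v = None means
  l_v is the root line. Lines are identified with the nodes they leave.\<close>

definition parrel :: "'v set \<Rightarrow> ('v \<Rightarrow> 'v option) \<Rightarrow> ('v \<times> 'v) set" where
  "parrel V par = {(v, w). v \<in> V \<and> par v = Some w}"

definition is_tree :: "'v set \<Rightarrow> ('v \<Rightarrow> 'v option) \<Rightarrow> bool" where
  "is_tree V par \<longleftrightarrow> finite V
     \<and> (\<forall>v\<in>V. \<forall>w. par v = Some w \<longrightarrow> w \<in> V)
     \<and> (\<exists>!v. v \<in> V \<and> par v = None)
     \<and> acyclic (parrel V par)"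

definition preceq :: "'v set \<Rightarrow> ('v \<Rightarrow> 'v option) \<Rightarrow> 'v \<Rightarrow> 'v \<Rightarrow> bool" where
  "preceq V par w v \<longleftrightarrow> w \<in> V \<and> (w, v) \<in> (parrel V par)\<^sup>*"

definition mom :: "'v set \<Rightarrow> ('v \<Rightarrow> 'v option) \<Rightarrow> ('v \<Rightarrow> 'd \<Rightarrow> int) \<Rightarrow> 'v \<Rightarrow> 'd \<Rightarrow> int" where
  "mom V par nu v = (\<lambda>i. \<Sum>w\<in>{w. preceq V par w v}. nu w i)"

definition labelled_tree :: "'v set \<Rightarrow> ('v \<Rightarrow> 'v option) \<Rightarrow> ('v \<Rightarrow> 'd \<Rightarrow> int) \<Rightarrow> ('v \<Rightarrow> int) \<Rightarrow> bool" where
  "labelled_tree V par nu sc \<longleftrightarrow> is_tree V par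
     \<and> (\<forall>v\<in>V. par v \<noteq> None \<longrightarrow> mom V par nu v \<noteq> (\<lambda>_. 0))
     \<and> (\<forall>v\<in>V. (mom V par nu v = (\<lambda>_. 0) \<longrightarrow> sc v = -1) \<and> (mom V par nu v \<noteq> (\<lambda>_. 0) \<longrightarrow> sc v \<ge> 0))"

definition low_lines :: "'v set \<Rightarrow> ('v \<Rightarrow> 'v option) \<Rightarrow> ('v \<Rightarrow> int) \<Rightarrow> int \<Rightarrow> ('v \<times> 'v) set" where
  "low_lines V par sc n = {(v, w). (v, w) \<in> parrel V par \<and> sc v \<le> n}"

definition component :: "'v set \<Rightarrow> ('v \<Rightarrow> 'v option) \<Rightarrow> ('v \<Rightarrow> int) \<Rightarrow> int \<Rightarrow> 'v \<Rightarrow> 'v set" where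
  "component V par sc n v =
     {w. (v, w) \<in> (low_lines V par sc n \<union> (low_lines V par sc n)\<inverse>)\<^sup>*}"

definition is_cluster :: "'v set \<Rightarrow> ('v \<Rightarrow> 'v option) \<Rightarrow> ('v \<Rightarrow> int) \<Rightarrow> int \<Rightarrow> 'v set \<Rightarrow> bool" where
  "is_cluster V par sc n T \<longleftrightarrow> (\<exists>v\<in>V. T = component V par sc n v)
     \<and> (\<exists>v\<in>T. \<exists>w\<in>T. par v = Some w \<and> sc v = n)"

definition entering :: "'v set \<Rightarrow> ('v \<Rightarrow> 'v option) \<Rightarrow> 'v set \<Rightarrow> 'v set" where
  "entering V par T = {w\<in>V. w \<notin> T \<and> (\<exists>u\<in>T. par w = Some u)}"

definition exiting :: "'v set \<Rightarrow> ('v \<Rightarrow> 'v option) \<Rightarrow> 'v set \<Rightarrow> 'v set" where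
  "exiting V par T = {w\<in>T. \<exists>u\<in>V. u \<notin> T \<and> par w = Some u}"

definition self_energy :: "'v set \<Rightarrow> ('v \<Rightarrow> 'v option) \<Rightarrow> ('v \<Rightarrow> 'd \<Rightarrow> int) \<Rightarrow> ('v \<Rightarrow> int) \<Rightarrow> 'v set \<Rightarrow> bool" where
  "self_energy V par nu sc T \<longleftrightarrow>
     (\<exists>n l l'. is_cluster V par sc n T \<and> entering V par T = {l'} \<and> exiting V par T = {l}
        \<and> mom V par nu l = mom V par nu l')
   \<or> (\<exists>v\<in>V. T = {v} \<and> nu v = (\<lambda>_. 0) \<and> card (entering V par T) = 1)"

definition renormalised :: "'v set \<Rightarrow> ('v \<Rightarrow> 'v option) \<Rightarrow> ('v \<Rightarrow> 'd \<Rightarrow> int) \<Rightarrow> ('v \<Rightarrow> int) \<Rightarrow> bool" where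
  "renormalised V par nu sc \<longleftrightarrow> \<not> (\<exists>T. self_energy V par nu sc T)"

definition Nlines :: "'v set \<Rightarrow> ('v \<Rightarrow> int) \<Rightarrow> nat \<Rightarrow> nat" where
  "Nlines V sc n = card {v\<in>V. sc v \<ge> int n}"

definition Kmodes :: "'v set \<Rightarrow> ('v \<Rightarrow> 'd::finite \<Rightarrow> int) \<Rightarrow> int" where
  "Kmodes V nu = (\<Sum>v\<in>V. norm1 (nu v))"

end

theory Submission
  imports Defs
begin


lemma alpha_set_ne: fixes \<omega> :: "'d::finite \<Rightarrow> real" shows "{\<bar>dotp \<omega> \<nu>\<bar> | \<nu>. \<nu> \<noteq> (\<lambda>_. 0) \<and> norm1 \<nu> \<le> 2 ^ m} \<noteq> {}"
proof -
  obtain i0 :: "'d::finite" where True by blast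
  define e where "e = (\<lambda>l. if l = i0 then (1::int) else 0)"
  have "e \<noteq> (\<lambda>_. 0)" unfolding e_def by (metis one_neq_zero)
  moreover have "norm1 e = 1" unfolding norm1_def e_def by (simp add: if_distrib cong: if_cong)
  moreover have "(1::int) \<le> 2^m" by simp
  ultimately have "\<bar>dotp \<omega> e\<bar> \<in> {\<bar>dotp \<omega> \<nu>\<bar> | \<nu>. \<nu> \<noteq> (\<lambda>_. 0) \<and> norm1 \<nu> \<le> 2 ^ m}" by auto
  then show ?thesis by blast
qed

lemma alpha_lower:
  assumes "\<nu> \<noteq> (\<lambda>_. 0)" "norm1 \<nu> \<le> 2^m"
  shows "alpha \<omega> m \<le> \<bar>dotp \<omega> \<nu>\<bar>"
  unfolding alpha_def
  by (rule cInf_lower) (use assms in \<open>auto intro: bdd_belowI[of _ 0]\<close>)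

lemma alpha_mono:
  assumes "m \<le> m'" shows "alpha \<omega> m' \<le> alpha \<omega> m"
  unfolding alpha_def
proof (rule cInf_superset_mono)
  show "{\<bar>dotp \<omega> \<nu>\<bar> | \<nu>. \<nu> \<noteq> (\<lambda>_. 0) \<and> norm1 \<nu> \<le> 2 ^ m} \<noteq> {}" by (rule alpha_set_ne)
  show "bdd_below {\<bar>dotp \<omega> \<nu>\<bar> | \<nu>. \<nu> \<noteq> (\<lambda>_. 0) \<and> norm1 \<nu> \<le> 2 ^ m'}"
    by (auto intro: bdd_belowI[of _ 0])
  have "(2::int)^m \<le> 2^m'" using assms by (simp add: power_increasing)
  then show "{\<bar>dotp \<omega> \<nu>\<bar> | \<nu>. \<nu> \<noteq> (\<lambda>_. 0) \<and> norm1 \<nu> \<le> 2 ^ m}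
     \<subseteq> {\<bar>dotp \<omega> \<nu>\<bar> | \<nu>. \<nu> \<noteq> (\<lambda>_. 0) \<and> norm1 \<nu> \<le> 2 ^ m'}" by (blast intro: order_trans)
qed

lemma norm1_big:
  assumes "\<nu> \<noteq> (\<lambda>_. 0)" "\<bar>dotp \<omega> \<nu>\<bar> < alpha \<omega> M"
  shows "2^M < norm1 \<nu>"
  using alpha_lower[OF assms(1), of M \<omega>] assms(2) by linarith

lemma norm1_ge: "0 \<le> norm1 \<nu>" unfolding norm1_def by (simp add: sum_nonneg)

lemma norm1_pos: assumes "\<nu> \<noteq> (\<lambda>_. 0)" shows "1 \<le> norm1 \<nu>"
proof -
  obtain i where "\<nu> i \<noteq> 0" using assms by auto
  then have "1 \<le> \<bar>\<nu> i\<bar>" by simp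
  also have "\<dots> \<le> norm1 \<nu>" unfolding norm1_def by (rule member_le_sum) auto
  finally show ?thesis .
qed

lemma dotp_diff: "dotp \<omega> (\<lambda>i. a i - b i) = dotp \<omega> a - dotp \<omega> b"
  unfolding dotp_def by (simp add: algebra_simps sum_subtractf)

lemma pexp_prop:
  fixes \<omega> :: "'d::finite \<Rightarrow> real"
  assumes "CARD('d) \<ge> 2" "bryuno \<omega>"
  shows "alpha \<omega> k < 2 * alpha \<omega> (k + pexp \<omega> k)"
proof -
  have apos: "\<And>m. alpha \<omega> m > 0" using assms(2) unfolding bryuno_def by blast
  define S where "S = {q. alpha \<omega> k < 2 * alpha \<omega> (k + q)}"
  have "0 \<in> S" using apos[of k] unfolding S_def by simp
  have fin: "finite S"
  proof (rule ccontr)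
    assume inf: "infinite S"
    define c where "c = alpha \<omega> k / 2"
    have cpos: "c > 0" using apos[of k] unfolding c_def by simp
    have allm: "alpha \<omega> m > c" for m
    proof (cases "m \<le> k")
      case True
      then show ?thesis using alpha_mono[OF True, of \<omega>] apos[of k] unfolding c_def by linarith
    next
      case False
      then obtain q where "m = k + q" by (metis le_add_diff_inverse nat_le_linear)
      obtain q' where "q' \<in> S" "q \<le> q'" using inf by (meson infinite_nat_iff_unbounded_le)
      then have "alpha \<omega> k < 2 * alpha \<omega> (k + q')" unfolding S_def by simp
      moreover have "alpha \<omega> (k+q') \<le> alpha \<omega> (k+q)" using \<open>q \<le> q'\<close> by (intro alpha_mono) simp
      ultimately have "alpha \<omega> k / 2 < alpha \<omega> (k+q)" by linarith
      then show ?thesis using \<open>m = k + q\<close> unfolding c_def by simp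
    qed
    have allnu: "\<bar>dotp \<omega> \<nu>\<bar> > c" if "\<nu> \<noteq> (\<lambda>_. 0)" for \<nu>
    proof -
      have "nat (norm1 \<nu>) < 2 ^ nat (norm1 \<nu>)" by (rule less_exp)
      then have "int (nat (norm1 \<nu>)) \<le> int (2 ^ nat (norm1 \<nu>))" by linarith
      then have "norm1 \<nu> \<le> 2 ^ nat (norm1 \<nu>)" using norm1_ge[of \<nu>] by simp
      from alpha_lower[OF that this, of \<omega>] allm[of "nat (norm1 \<nu>)"] show ?thesis by linarith
    qed
    obtain i :: 'd where True by blast
    have "card (UNIV - {i}) \<ge> 1" using assms(1) by (simp add: card_Diff_singleton)
    then obtain j where "j \<noteq> i" by (metis DiffE card_0_eq finite not_one_le_zero equals0I insertCI)
    have wj: "\<bar>\<omega> j\<bar> > c"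
    proof -
      have "(\<lambda>l. if l = j then (1::int) else 0) \<noteq> (\<lambda>_. 0)" by (metis one_neq_zero)
      from allnu[OF this] show ?thesis unfolding dotp_def by (simp add: if_distrib cong: if_cong)
    qed
    define N where "N = nat \<lceil>\<bar>\<omega> j\<bar> / c\<rceil> + 1"
    have Npos: "N > 0" unfolding N_def by simp
    obtain h q where hq: "0 < q" "\<bar>of_int q * (\<omega> i / \<omega> j) - of_int h\<bar> < 1/N"
      using Dirichlet_approx[OF Npos, of "\<omega> i / \<omega> j"] by blast
    define \<nu> where "\<nu> = (\<lambda>l. if l = i then q else if l = j then -h else 0)"
    have "\<nu> \<noteq> (\<lambda>_. 0)" using hq(1) unfolding \<nu>_def by (metis less_irrefl)
    from allnu[OF this] have c1: "\<bar>dotp \<omega> \<nu>\<bar> > c" .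
    have "dotp \<omega> \<nu> = (\<Sum>l\<in>UNIV. (if l = i then \<omega> i * q else 0) + (if l = j then - (\<omega> j * h) else 0))"
      unfolding dotp_def \<nu>_def using \<open>j \<noteq> i\<close> by (intro sum.cong) auto
    also have "\<dots> = \<omega> i * q - \<omega> j * h" by (simp add: sum.distrib)
    also have "\<dots> = \<omega> j * (of_int q * (\<omega> i / \<omega> j) - of_int h)" using wj cpos by (auto simp: field_simps)
    finally have "\<bar>dotp \<omega> \<nu>\<bar> = \<bar>\<omega> j\<bar> * \<bar>of_int q * (\<omega> i / \<omega> j) - of_int h\<bar>" by (simp add: abs_mult)
    also have "\<dots> \<le> \<bar>\<omega> j\<bar> * (1/N)" using hq(2) by (intro mult_left_mono) auto
    also have "\<dots> < c"
    proof -
      have "\<bar>\<omega> j\<bar> / c < N" unfolding N_def by linarith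
      then have "\<bar>\<omega> j\<bar> < c * N" using cpos by (simp add: field_simps)
      then show ?thesis using Npos by (simp add: field_simps)
    qed
    finally show False using c1 by simp
  qed
  have "pexp \<omega> k = Max S" unfolding pexp_def S_def by simp
  moreover have "Max S \<in> S" using fin \<open>0 \<in> S\<close> by (intro Max_in) auto
  ultimately show ?thesis unfolding S_def by simp
qed



locale bt =
  fixes V :: "'v set" and par :: "'v \<Rightarrow> 'v option"
    and nu :: "'v \<Rightarrow> 'd::finite \<Rightarrow> int" and sc :: "'v \<Rightarrow> int"
    and k :: int and E :: real
  assumes lt: "labelled_tree V par nu sc"
    and ren: "renormalised V par nu sc"
    and Epos: "E > 0"
    and H1: "\<forall>v\<in>V. k \<le> sc v \<longrightarrow> real_of_int (norm1 (mom V par nu v)) > E"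
    and H2: "\<forall>v\<in>V. \<forall>w\<in>V. k \<le> sc v \<longrightarrow> k \<le> sc w \<longrightarrow> mom V par nu v \<noteq> mom V par nu w
              \<longrightarrow> real_of_int (norm1 (\<lambda>i. mom V par nu v i - mom V par nu w i)) > E"
begin

abbreviation "R \<equiv> parrel V par"

definition desc :: "'v \<Rightarrow> 'v set" where "desc v = {w. preceq V par w v}"
definition Nd :: "'v \<Rightarrow> nat" where "Nd v = card {w\<in>desc v. k \<le> sc w}"
definition Kd :: "'v \<Rightarrow> real" where "Kd v = (\<Sum>w\<in>desc v. real_of_int (norm1 (nu w)))"
definition Bs :: "'v \<Rightarrow> 'v set" where
  "Bs v = {b. (b, v) \<in> R\<^sup>+ \<and> k \<le> sc b \<and> (\<forall>u. (b, u) \<in> R\<^sup>+ \<and> (u, v) \<in> R\<^sup>+ \<longrightarrow> sc u < k)}"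

lemma tree: "is_tree V par" using lt unfolding labelled_tree_def by blast
lemma finV: "finite V" using tree unfolding is_tree_def by blast
lemma closed: "v \<in> V \<Longrightarrow> par v = Some w \<Longrightarrow> w \<in> V" using tree unfolding is_tree_def by blast
lemma acyc: "acyclic R" using tree unfolding is_tree_def by blast
lemma R_iff: "(a, b) \<in> R \<longleftrightarrow> a \<in> V \<and> par a = Some b" unfolding parrel_def by simp
lemma RV: "(a, b) \<in> R \<Longrightarrow> a \<in> V \<and> b \<in> V" using closed R_iff by blast
lemma RstarV: "(a, b) \<in> R\<^sup>* \<Longrightarrow> a \<in> V \<Longrightarrow> b \<in> V"
  by (induction rule: rtrancl_induct) (auto dest: RV)
lemma RplusV: assumes "(a, b) \<in> R\<^sup>+" shows "a \<in> V \<and> b \<in> V"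
proof -
  from tranclD[OF assms] obtain c where "(a, c) \<in> R" "(c, b) \<in> R\<^sup>*" by blast
  then show ?thesis using RV RstarV by blast
qed
lemma sv: "single_valued R" by (rule single_valuedI) (auto simp: R_iff)
lemma comp: "(x, a) \<in> R\<^sup>* \<Longrightarrow> (x, b) \<in> R\<^sup>* \<Longrightarrow> (a, b) \<in> R\<^sup>* \<or> (b, a) \<in> R\<^sup>*"
  using single_valued_confluent[OF sv] by blast
lemma irr: "(x, x) \<notin> R\<^sup>+" using acyc unfolding acyclic_def by blast

lemma desc_iff: "w \<in> desc v \<longleftrightarrow> w \<in> V \<and> (w, v) \<in> R\<^sup>*"
  unfolding desc_def preceq_def by simp
lemma desc_sub: "desc v \<subseteq> V" by (auto simp: desc_iff)
lemma desc_fin: "finite (desc v)" using desc_sub finV finite_subset by blast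
lemma desc_self: "v \<in> V \<Longrightarrow> v \<in> desc v" by (simp add: desc_iff)
lemma desc_mono: "(u, v) \<in> R\<^sup>* \<Longrightarrow> desc u \<subseteq> desc v"
  by (auto simp: desc_iff intro: rtrancl_trans)
lemma desc_strict: assumes "(u, v) \<in> R\<^sup>+" shows "v \<notin> desc u"
proof
  assume "v \<in> desc u"
  with assms have "(u, u) \<in> R\<^sup>+" by (auto simp: desc_iff intro: trancl_rtrancl_trancl)
  then show False using irr by blast
qed
lemma desc_psub: assumes "(u, v) \<in> R\<^sup>+" shows "desc u \<subset> desc v"
proof -
  have "desc u \<subseteq> desc v" using desc_mono[OF trancl_into_rtrancl[OF assms]] .
  moreover have "v \<in> desc v" using desc_self RplusV[OF assms] by blast
  moreover have "v \<notin> desc u" using desc_strict[OF assms] .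
  ultimately show ?thesis by blast
qed
lemma card_desc_less: "(u, v) \<in> R\<^sup>+ \<Longrightarrow> card (desc u) < card (desc v)"
  using desc_psub desc_fin psubset_card_mono by metis
lemma trancl_first: "(x, y) \<in> R\<^sup>+ \<Longrightarrow> \<exists>z. x \<in> V \<and> par x = Some z \<and> (z, y) \<in> R\<^sup>*"
  by (auto simp: R_iff dest!: tranclD)

lemma mom_eq: "mom V par nu v = (\<lambda>i. \<Sum>w\<in>desc v. nu w i)"
  unfolding mom_def desc_def by simp

lemma up:
  assumes "k \<le> sc x" "(x, v) \<in> R\<^sup>+"
  shows "\<exists>b\<in>Bs v. (x, b) \<in> R\<^sup>*"
proof -
  define S where "S = {u. (x, u) \<in> R\<^sup>* \<and> (u, v) \<in> R\<^sup>+ \<and> k \<le> sc u}"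
  have "S \<subseteq> V" unfolding S_def using RplusV by blast
  then have fS: "finite S" using finV finite_subset by blast
  have "x \<in> S" unfolding S_def using assms by blast
  define f where "f u = card (desc u)" for u
  obtain b where b: "b \<in> S" "f b = Max (f ` S)"
    using Max_in[of "f ` S"] fS \<open>x \<in> S\<close> by (metis (no_types, lifting) empty_iff finite_imageI image_iff)
  have bmax: "f u \<le> f b" if "u \<in> S" for u using b(2) fS that by simp
  have "b \<in> Bs v"
    unfolding Bs_def
  proof (intro CollectI conjI allI impI)
    show "(b, v) \<in> R\<^sup>+" "k \<le> sc b" using b(1) unfolding S_def by auto
    fix u assume u: "(b, u) \<in> R\<^sup>+ \<and> (u, v) \<in> R\<^sup>+"
    show "sc u < k"
    proof (rule ccontr)
      assume "\<not> sc u < k"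
      then have "u \<in> S" using u b(1) unfolding S_def
        by (auto intro: rtrancl_trans trancl_into_rtrancl)
      then have "f u \<le> f b" by (rule bmax)
      moreover have "f b < f u" unfolding f_def using u card_desc_less by blast
      ultimately show False by simp
    qed
  qed
  moreover have "(x, b) \<in> R\<^sup>*" using b(1) unfolding S_def by blast
  ultimately show ?thesis by blast
qed

lemma Bs_trancl: "b \<in> Bs v \<Longrightarrow> (b, v) \<in> R\<^sup>+" unfolding Bs_def by blast
lemma Bs_big: "b \<in> Bs v \<Longrightarrow> k \<le> sc b" unfolding Bs_def by blast
lemma Bs_V: assumes "b \<in> Bs v" shows "b \<in> V" using RplusV[OF Bs_trancl[OF assms]] by simp
lemma Bs_fin: "finite (Bs v)" by (rule finite_subset[OF _ finV]) (auto intro: Bs_V)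
lemma Bs_par: assumes "b \<in> Bs v" shows "par b \<noteq> None"
  using trancl_first[OF Bs_trancl[OF assms]] by auto

lemma Bs_disj:
  assumes "b \<in> Bs v" "b' \<in> Bs v" "b \<noteq> b'"
  shows "desc b \<inter> desc b' = {}"
proof (rule ccontr)
  assume "desc b \<inter> desc b' \<noteq> {}"
  then obtain x where "(x, b) \<in> R\<^sup>*" "(x, b') \<in> R\<^sup>*" using desc_iff by blast
  then have "(b, b') \<in> R\<^sup>+ \<or> (b', b) \<in> R\<^sup>+"
    using comp assms(3) by (metis rtrancl_eq_or_trancl)
  then show False
  proof
    assume "(b, b') \<in> R\<^sup>+"
    then show False using assms(1,2) unfolding Bs_def by fastforce
  next
    assume "(b', b) \<in> R\<^sup>+"
    then show False using assms(1,2) unfolding Bs_def by fastforce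
  qed
qed

lemma Bs_sub: assumes "b \<in> Bs v" shows "desc b \<subseteq> desc v - {v}"
  using desc_mono[OF trancl_into_rtrancl[OF Bs_trancl[OF assms]]] desc_strict[OF Bs_trancl[OF assms]]
  by blast

lemma big_decomp:
  assumes "v \<in> V"
  shows "{w\<in>desc v. k \<le> sc w} = (if k \<le> sc v then {v} else {}) \<union> (\<Union>b\<in>Bs v. {w\<in>desc b. k \<le> sc w})"
proof
  show "{w\<in>desc v. k \<le> sc w} \<subseteq> (if k \<le> sc v then {v} else {}) \<union> (\<Union>b\<in>Bs v. {w\<in>desc b. k \<le> sc w})"
  proof
    fix w assume w: "w \<in> {w\<in>desc v. k \<le> sc w}"
    show "w \<in> (if k \<le> sc v then {v} else {}) \<union> (\<Union>b\<in>Bs v. {w\<in>desc b. k \<le> sc w})"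
    proof (cases "w = v")
      case True then show ?thesis using w by simp
    next
      case False
      then have "(w, v) \<in> R\<^sup>+" using w desc_iff by (metis mem_Collect_eq rtrancl_eq_or_trancl)
      then obtain b where "b \<in> Bs v" "(w, b) \<in> R\<^sup>*" using up w by blast
      then show ?thesis using w desc_iff by blast
    qed
  qed
  show "(if k \<le> sc v then {v} else {}) \<union> (\<Union>b\<in>Bs v. {w\<in>desc b. k \<le> sc w}) \<subseteq> {w\<in>desc v. k \<le> sc w}"
    using desc_self[OF assms] Bs_sub by auto
qed

lemma Nd_decomp:
  assumes "v \<in> V"
  shows "Nd v = (if k \<le> sc v then 1 else 0) + (\<Sum>b\<in>Bs v. Nd b)"
proof -
  have disj1: "(if k \<le> sc v then {v} else {}) \<inter> (\<Union>b\<in>Bs v. {w\<in>desc b. k \<le> sc w}) = {}"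
    using Bs_sub by auto
  have fin2: "finite (\<Union>b\<in>Bs v. {w\<in>desc b. k \<le> sc w})" using Bs_fin desc_fin by auto
  have "Nd v = card (if k \<le> sc v then {v} else {}) + card (\<Union>b\<in>Bs v. {w\<in>desc b. k \<le> sc w})"
    unfolding Nd_def big_decomp[OF assms] by (rule card_Un_disjoint) (use disj1 fin2 in auto)
  also have "card (\<Union>b\<in>Bs v. {w\<in>desc b. k \<le> sc w}) = (\<Sum>b\<in>Bs v. Nd b)"
    unfolding Nd_def
    by (rule card_UN_disjoint) (use Bs_fin desc_fin Bs_disj in fastforce)+
  finally show ?thesis by simp
qed

lemma Nd_pos: "b \<in> Bs v \<Longrightarrow> 1 \<le> Nd b"
proof -
  assume b: "b \<in> Bs v"
  have "b \<in> {w\<in>desc b. k \<le> sc w}" using b Bs_big Bs_V desc_self by blast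
  then have "{w\<in>desc b. k \<le> sc w} \<noteq> {}" by blast
  moreover have "finite {w\<in>desc b. k \<le> sc w}" using desc_fin by simp
  ultimately show ?thesis unfolding Nd_def by (simp add: Suc_le_eq card_gt_0_iff)
qed

lemma Kd_nonneg_sum: "0 \<le> (\<Sum>w\<in>A. real_of_int (norm1 (nu w)))"
  by (intro sum_nonneg) (simp add: norm1_def sum_nonneg)

lemma Kd_decomp:
  assumes "v \<in> V"
  shows "Kd v = (\<Sum>w\<in>desc v - (\<Union>b\<in>Bs v. desc b). real_of_int (norm1 (nu w))) + (\<Sum>b\<in>Bs v. Kd b)"
proof -
  have sub: "(\<Union>b\<in>Bs v. desc b) \<subseteq> desc v" using Bs_sub by blast
  have "Kd v = (\<Sum>w\<in>desc v - (\<Union>b\<in>Bs v. desc b). real_of_int (norm1 (nu w)))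
      + (\<Sum>w\<in>(\<Union>b\<in>Bs v. desc b). real_of_int (norm1 (nu w)))"
    unfolding Kd_def using sum.subset_diff[OF sub desc_fin] by simp
  also have "(\<Sum>w\<in>(\<Union>b\<in>Bs v. desc b). real_of_int (norm1 (nu w))) = (\<Sum>b\<in>Bs v. Kd b)"
    unfolding Kd_def by (rule sum.UNION_disjoint) (use Bs_fin desc_fin Bs_disj in auto)
  finally show ?thesis .
qed

lemma norm1_sum_le:
  assumes "finite S"
  shows "real_of_int (norm1 (\<lambda>i. \<Sum>w\<in>S. nu w i)) \<le> (\<Sum>w\<in>S. real_of_int (norm1 (nu w)))"
proof -
  have "norm1 (\<lambda>i. \<Sum>w\<in>S. nu w i) = (\<Sum>i\<in>UNIV. \<bar>\<Sum>w\<in>S. nu w i\<bar>)" unfolding norm1_def by simp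
  also have "\<dots> \<le> (\<Sum>i\<in>UNIV. \<Sum>w\<in>S. \<bar>nu w i\<bar>)" by (intro sum_mono sum_abs)
  also have "\<dots> = (\<Sum>w\<in>S. norm1 (nu w))" unfolding norm1_def by (rule sum.swap)
  finally show ?thesis by (metis of_int_le_iff of_int_sum)
qed

lemma Kd_ge_mom: "real_of_int (norm1 (mom V par nu v)) \<le> Kd v"
  unfolding mom_eq Kd_def using norm1_sum_le desc_fin by blast

end



context bt begin

lemma no_se:
  assumes v: "v \<in> V" "par v = Some u" "k \<le> sc v" and B: "Bs v = {w}"
    and eq: "mom V par nu v = mom V par nu w"
  shows False
proof -
  define T where "T = desc v - desc w"
  have wB: "w \<in> Bs v" using B by simp
  have wv: "(w, v) \<in> R\<^sup>+" using Bs_trancl[OF wB] .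
  have wV: "w \<in> V" using Bs_V[OF wB] .
  have wbig: "k \<le> sc w" using Bs_big[OF wB] .
  have sub: "desc w \<subseteq> desc v - {v}" using Bs_sub[OF wB] .
  have vT: "v \<in> T" unfolding T_def using sub desc_self[OF v(1)] by blast
  have wT: "w \<notin> T" unfolding T_def using desc_self[OF wV] by blast
  have TV: "T \<subseteq> V" unfolding T_def using desc_sub by blast
  have E2: "\<exists>y. par x = Some y \<and> y \<in> T" if "x \<in> T" "x \<noteq> v" for x
  proof -
    have "(x, v) \<in> R\<^sup>*" "x \<in> V" using that desc_iff unfolding T_def by auto
    then have "(x, v) \<in> R\<^sup>+" using that(2) by (metis rtrancl_eq_or_trancl)
    then obtain z where z: "par x = Some z" "(z, v) \<in> R\<^sup>*" using trancl_first by blast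
    have zV: "z \<in> V" using closed[OF \<open>x \<in> V\<close> z(1)] .
    have xz: "(x, z) \<in> R" using R_iff \<open>x \<in> V\<close> z(1) by blast
    have "z \<notin> desc w"
    proof
      assume "z \<in> desc w"
      then have "(x, w) \<in> R\<^sup>*" using xz desc_iff by (meson converse_rtrancl_into_rtrancl)
      then show False using that(1) \<open>x \<in> V\<close> desc_iff unfolding T_def by blast
    qed
    then show ?thesis using z zV desc_iff unfolding T_def by blast
  qed
  have E3: "sc x < k" if "x \<in> T" "x \<noteq> v" for x
  proof (rule ccontr)
    assume "\<not> sc x < k"
    have "(x, v) \<in> R\<^sup>*" "x \<in> V" using that desc_iff unfolding T_def by auto
    then have "(x, v) \<in> R\<^sup>+" using that(2) by (metis rtrancl_eq_or_trancl)
    then obtain b where "b \<in> Bs v" "(x, b) \<in> R\<^sup>*" using up \<open>\<not> sc x < k\<close> by force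
    then have "(x, w) \<in> R\<^sup>*" using B by simp
    then show False using that(1) \<open>x \<in> V\<close> desc_iff unfolding T_def by blast
  qed
  have E4: "\<exists>y. par w = Some y \<and> y \<in> T"
  proof -
    obtain z where z: "par w = Some z" "(z, v) \<in> R\<^sup>*" using trancl_first[OF wv] by blast
    have zV: "z \<in> V" using closed[OF wV z(1)] .
    have wz: "(w, z) \<in> R" using R_iff wV z(1) by blast
    have "z \<notin> desc w"
    proof
      assume "z \<in> desc w"
      then have "(z, w) \<in> R\<^sup>*" using desc_iff by blast
      then have "(w, w) \<in> R\<^sup>+" using wz by (meson rtrancl_into_trancl2)
      then show False using irr by blast
    qed
    then show ?thesis using z zV desc_iff unfolding T_def by blast
  qed
  have ent: "entering V par T = {w}"
  proof
    show "{w} \<subseteq> entering V par T" using E4 wV wT unfolding entering_def by blast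
    show "entering V par T \<subseteq> {w}"
    proof
      fix y assume "y \<in> entering V par T"
      then obtain u' where y: "y \<in> V" "y \<notin> T" "u' \<in> T" "par y = Some u'" unfolding entering_def by blast
      have "(y, u') \<in> R" using R_iff y by blast
      moreover have "(u', v) \<in> R\<^sup>*" "u' \<in> V" using y(3) desc_iff unfolding T_def by auto
      ultimately have "(y, v) \<in> R\<^sup>*" by (meson converse_rtrancl_into_rtrancl)
      then have yw: "y \<in> desc w" using y(1,2) desc_iff unfolding T_def by blast
      show "y \<in> {w}"
      proof (rule ccontr)
        assume "y \<notin> {w}"
        then have "(y, w) \<in> R\<^sup>+" using yw desc_iff by (metis rtrancl_eq_or_trancl singletonI)
        then obtain z where "par y = Some z" "(z, w) \<in> R\<^sup>*" using trancl_first by blast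
        then have "(u', w) \<in> R\<^sup>*" using y(4) by simp
        then show False using y(3) \<open>u' \<in> V\<close> desc_iff unfolding T_def by blast
      qed
    qed
  qed
  have ex: "exiting V par T = {v}"
  proof
    have uV: "u \<in> V" using closed[OF v(1,2)] .
    have "u \<notin> T"
    proof
      assume "u \<in> T"
      then have "(u, v) \<in> R\<^sup>*" using desc_iff unfolding T_def by blast
      moreover have "(v, u) \<in> R" using R_iff v by blast
      ultimately have "(v, v) \<in> R\<^sup>+" by (meson rtrancl_into_trancl2)
      then show False using irr by blast
    qed
    then show "{v} \<subseteq> exiting V par T" using vT uV v(2) unfolding exiting_def by blast
    show "exiting V par T \<subseteq> {v}"
    proof
      fix x assume "x \<in> exiting V par T"
      then obtain u' where x: "x \<in> T" "u' \<notin> T" "par x = Some u'" unfolding exiting_def by blast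
      show "x \<in> {v}"
      proof (rule ccontr)
        assume "x \<notin> {v}"
        then show False using E2[OF x(1)] x by auto
      qed
    qed
  qed
  have momT: "mom V par nu v i = mom V par nu w i + (\<Sum>x\<in>T. nu x i)" for i
  proof -
    have "desc w \<subseteq> desc v" using sub by blast
    then show ?thesis unfolding mom_eq T_def using sum.subset_diff[OF _ desc_fin, of "desc w" v "\<lambda>x. nu x i"]
      by (simp add: add.commute)
  qed
  have sumT0: "(\<Sum>x\<in>T. nu x i) = 0" for i using momT[of i] eq by simp
  have finT: "finite T" using TV finV finite_subset by blast
  show False
  proof (cases "T = {v}")
    case True
    have "nu v = (\<lambda>_. 0)" using sumT0 True by auto
    then have "self_energy V par nu sc T"
      unfolding self_energy_def using True v(1) ent by auto
    then show False using ren unfolding renormalised_def by blast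
  next
    case False
    define I where "I = T - {v}"
    have Ine: "I \<noteq> {}" using False vT unfolding I_def by blast
    have finI: "finite I" using finT unfolding I_def by simp
    define n' where "n' = Max (sc ` I)"
    have "n' \<in> sc ` I" unfolding n'_def using finI Ine by (intro Max_in) auto
    then obtain x0 where x0: "x0 \<in> I" "sc x0 = n'" by auto
    have scI: "sc x \<le> n'" if "x \<in> I" for x using finI that unfolding n'_def by simp
    have n'k: "n' < k" using E3 x0 unfolding I_def by force
    define L where "L = low_lines V par sc n'"
    have L_iff: "(a, b) \<in> L \<longleftrightarrow> a \<in> V \<and> par a = Some b \<and> sc a \<le> n'" for a b
      unfolding L_def low_lines_def parrel_def by simp
    have comp_sub: "z \<in> T" if "(v, z) \<in> (L \<union> L\<inverse>)\<^sup>*" for z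
      using that
    proof (induction rule: rtrancl_induct)
      case base then show ?case using vT .
    next
      case (step y z)
      from step.hyps(2) show ?case
      proof
        assume yz: "(y, z) \<in> L"
        then have "y \<noteq> v" using L_iff n'k v(3) by auto
        then obtain y' where "par y = Some y'" "y' \<in> T" using E2 step.IH by blast
        then show ?thesis using yz L_iff by auto
      next
        assume "(y, z) \<in> L\<inverse>"
        then have zy: "(z, y) \<in> L" by simp
        show ?thesis
        proof (rule ccontr)
          assume "z \<notin> T"
          then have "z \<in> entering V par T" unfolding entering_def using zy L_iff step.IH by blast
          then have "z = w" using ent by blast
          then show False using zy L_iff n'k wbig by auto
        qed
      qed
    qed
    have sub_comp: "(x, v) \<in> L\<^sup>*" if "x \<in> T" for x
    proof -
      have "(x, v) \<in> R\<^sup>*" using that desc_iff unfolding T_def by blast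
      then show ?thesis using that
      proof (induction rule: converse_rtrancl_induct)
        case base then show ?case by simp
      next
        case (step x y)
        show ?case
        proof (cases "x = v")
          case True then show ?thesis by simp
        next
          case False
          obtain y' where y': "par x = Some y'" "y' \<in> T" using E2[OF step.prems False] by blast
          have "par x = Some y" "x \<in> V" using step.hyps(1) R_iff by auto
          then have "y = y'" using y' by simp
          have "x \<in> I" using step.prems False unfolding I_def by blast
          then have "(x, y) \<in> L" using L_iff \<open>par x = Some y\<close> \<open>x \<in> V\<close> scI by blast
          moreover have "(y, v) \<in> L\<^sup>*" using step.IH y' \<open>y = y'\<close> by blast
          ultimately show ?thesis by (meson converse_rtrancl_into_rtrancl)
        qed
      qed
    qed
    have "T = component V par sc n' v"
    proof
      show "component V par sc n' v \<subseteq> T"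
        unfolding component_def L_def[symmetric] using comp_sub by blast
      show "T \<subseteq> component V par sc n' v"
      proof
        fix x assume "x \<in> T"
        then have "(x, v) \<in> L\<^sup>*" by (rule sub_comp)
        then have "(v, x) \<in> (L\<inverse>)\<^sup>*" by (simp add: rtrancl_converse)
        then have "(v, x) \<in> (L \<union> L\<inverse>)\<^sup>*" by (rule rtrancl_mono[THEN subsetD, rotated]) blast
        then show "x \<in> component V par sc n' v" unfolding component_def L_def by simp
      qed
    qed
    moreover obtain y0 where "par x0 = Some y0" "y0 \<in> T"
      using E2 x0(1) unfolding I_def by blast
    ultimately have "is_cluster V par sc n' T"
      unfolding is_cluster_def using v(1) x0 unfolding I_def by blast
    then have "self_energy V par nu sc T"
      unfolding self_energy_def using ent ex eq by blast
    then show False using ren unfolding renormalised_def by blast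
  qed
qed

end

context bt begin

lemma main:
  assumes "v \<in> V"
  shows "E * real (Nd v) \<le> 2 * Kd v \<and> (par v \<noteq> None \<longrightarrow> E * real (Nd v) \<le> max 0 (2 * Kd v - E))"
  using assms
proof (induction "card (desc v)" arbitrary: v rule: less_induct)
  case less
  note vV = less.prems
  have IH: "E * real (Nd b) \<le> 2 * Kd b - E" if b: "b \<in> Bs v" for b
  proof -
    have "card (desc b) < card (desc v)" using card_desc_less[OF Bs_trancl[OF b]] .
    then have "par b \<noteq> None \<longrightarrow> E * real (Nd b) \<le> max 0 (2 * Kd b - E)"
      using less.hyps Bs_V[OF b] by blast
    then have h: "E * real (Nd b) \<le> max 0 (2 * Kd b - E)" using Bs_par[OF b] by blast
    have "1 \<le> real (Nd b)" using Nd_pos[OF b] by simp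
    then have "E \<le> E * real (Nd b)" using Epos by simp
    then show ?thesis using h Epos by linarith
  qed
  define rest where "rest = (\<Sum>w\<in>desc v - (\<Union>b\<in>Bs v. desc b). real_of_int (norm1 (nu w)))"
  have rest0: "0 \<le> rest" unfolding rest_def by (rule Kd_nonneg_sum)
  have Kdv: "Kd v = rest + (\<Sum>b\<in>Bs v. Kd b)" unfolding rest_def using Kd_decomp[OF vV] .
  have Ndv: "E * real (Nd v) = E * (if k \<le> sc v then 1 else 0) + (\<Sum>b\<in>Bs v. E * real (Nd b))"
    using Nd_decomp[OF vV] by (simp add: sum_distrib_left distrib_left)
  have sumle: "(\<Sum>b\<in>Bs v. E * real (Nd b)) \<le> 2 * (\<Sum>b\<in>Bs v. Kd b) - E * real (card (Bs v))"
  proof -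
    have "(\<Sum>b\<in>Bs v. E * real (Nd b)) \<le> (\<Sum>b\<in>Bs v. 2 * Kd b - E)" by (rule sum_mono) (rule IH)
    also have "\<dots> = 2 * (\<Sum>b\<in>Bs v. Kd b) - E * real (card (Bs v))"
      by (simp add: sum_subtractf sum_distrib_left)
    finally show ?thesis .
  qed
  have Kdnn: "0 \<le> Kd v" unfolding Kd_def by (rule Kd_nonneg_sum)
  show ?case
  proof (cases "Bs v = {}")
    case True
    then have N: "E * real (Nd v) = E * (if k \<le> sc v then 1 else 0)" using Ndv by simp
    show ?thesis
    proof (cases "k \<le> sc v")
      case True
      have "E < Kd v" using H1 vV True Kd_ge_mom[of v] by fastforce
      moreover have "E * real (Nd v) = E" using N True by simp
      ultimately have "E * real (Nd v) \<le> 2 * Kd v - E" by linarith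
      then show ?thesis using Epos by (auto simp: le_max_iff_disj)
    next
      case False
      then have "E * real (Nd v) = 0" using N by simp
      then show ?thesis using Kdnn by (auto simp: le_max_iff_disj)
    qed
  next
    case Bne: False
    have c1: "1 \<le> card (Bs v)" using Bne Bs_fin by (simp add: Suc_le_eq card_gt_0_iff)
    show ?thesis
    proof (cases "k \<le> sc v \<and> card (Bs v) = 1")
      case False
      then have "E * (if k \<le> sc v then 1 else 0) \<le> E * real (card (Bs v)) - E"
      proof (cases "k \<le> sc v")
        case True
        then have "2 \<le> card (Bs v)" using False c1 by simp
        then have "2 * E \<le> E * real (card (Bs v))" using Epos by simp
        then show ?thesis using True by simp
      next
        case False
        then show ?thesis using c1 Epos by simp
      qed
      then have "E * real (Nd v) \<le> 2 * Kd v - E" using Ndv sumle Kdv rest0 by linarith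
      then show ?thesis using Epos by (auto simp: le_max_iff_disj)
    next
      case True
      then obtain w where B: "Bs v = {w}" using card_1_singletonE by blast
      then have wB: "w \<in> Bs v" by simp
      have N: "E * real (Nd v) = E + E * real (Nd w)" using Ndv B True by simp
      have IHw: "E * real (Nd w) \<le> 2 * Kd w - E" using IH[OF wB] .
      have Kdv': "Kd v = rest + Kd w" using Kdv B by simp
      have part1: "E * real (Nd v) \<le> 2 * Kd v" using N IHw Kdv' rest0 by linarith
      have part2: "E * real (Nd v) \<le> max 0 (2 * Kd v - E)" if pv: "par v \<noteq> None"
      proof -
        obtain u where pu: "par v = Some u" using pv by blast
        have neq: "mom V par nu v \<noteq> mom V par nu w"
          using no_se[OF vV pu _ B] True by blast
        have wV: "w \<in> V" using Bs_V[OF wB] .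
        have gt: "real_of_int (norm1 (\<lambda>i. mom V par nu v i - mom V par nu w i)) > E"
          using H2 vV wV True Bs_big[OF wB] neq by blast
        have sub: "desc w \<subseteq> desc v" using Bs_sub[OF wB] by blast
        have diff: "(\<lambda>i. mom V par nu v i - mom V par nu w i) = (\<lambda>i. \<Sum>x\<in>desc v - desc w. nu x i)"
          unfolding mom_eq by (intro ext) (rule sum_diff[OF desc_fin sub, where f="\<lambda>x. nu x _", symmetric])
        have "real_of_int (norm1 (\<lambda>i. mom V par nu v i - mom V par nu w i))
              \<le> (\<Sum>x\<in>desc v - desc w. real_of_int (norm1 (nu x)))"
          unfolding diff by (rule norm1_sum_le) (simp add: desc_fin)
        moreover have "desc v - (\<Union>b\<in>Bs v. desc b) = desc v - desc w" using B by simp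
        ultimately have "E < rest" using gt unfolding rest_def by simp
        then have b: "2 * Kd w \<le> 2 * Kd v - E" using Kdv' Epos by linarith
        have a: "E * real (Nd v) \<le> 2 * Kd w" using N IHw by linarith
        have "E * real (Nd v) \<le> 2 * Kd v - E" using a b by linarith
        then show ?thesis by (simp add: le_max_iff_disj)
      qed
      show ?thesis using part1 part2 by blast
    qed
  qed
qed

lemma root_desc:
  obtains r where "r \<in> V" "desc r = V"
proof -
  obtain r where r: "r \<in> V" "par r = None" "\<And>x. x \<in> V \<Longrightarrow> par x = None \<Longrightarrow> x = r"
    using tree unfolding is_tree_def by blast
  have "(x, r) \<in> R\<^sup>*" if x: "x \<in> V" for x
  proof -
    define S where "S = {y. (x, y) \<in> R\<^sup>*}"
    have "S \<subseteq> V" unfolding S_def using RstarV x by blast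
    then have fS: "finite S" using finV finite_subset by blast
    have "x \<in> S" unfolding S_def by simp
    define f where "f y = card (desc y)" for y
    have "Max (f ` S) \<in> f ` S" using fS \<open>x \<in> S\<close> by (intro Max_in) auto
    then obtain y where y: "y \<in> S" "f y = Max (f ` S)" by auto
    have ymax: "f z \<le> f y" if "z \<in> S" for z using y(2) fS that by simp
    have yV: "y \<in> V" using y(1) \<open>S \<subseteq> V\<close> by blast
    have "par y = None"
    proof (rule ccontr)
      assume "par y \<noteq> None"
      then obtain z where z: "par y = Some z" by blast
      then have yz: "(y, z) \<in> R" using R_iff yV by blast
      then have "z \<in> S" using y(1) unfolding S_def by (simp add: rtrancl.rtrancl_into_rtrancl)
      then have "f z \<le> f y" by (rule ymax)
      moreover have "f y < f z" unfolding f_def using card_desc_less[OF r_into_trancl[OF yz]] .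
      ultimately show False by simp
    qed
    then have "y = r" using r(3) yV by blast
    then show ?thesis using y(1) unfolding S_def by simp
  qed
  then have "desc r = V" using desc_sub desc_iff by blast
  then show ?thesis using that r(1) by blast
qed

lemma final:
  "E * real (card {v\<in>V. k \<le> sc v}) \<le> 2 * real_of_int (Kmodes V nu)"
proof -
  obtain r where r: "r \<in> V" "desc r = V" by (rule root_desc)
  have "E * real (Nd r) \<le> 2 * Kd r" using main[OF r(1)] by blast
  moreover have "Nd r = card {v\<in>V. k \<le> sc v}" unfolding Nd_def r(2) ..
  moreover have "Kd r = real_of_int (Kmodes V nu)" unfolding Kd_def r(2) Kmodes_def by simp
  ultimately show ?thesis by simp
qed

end



lemma mseq_mono: "a \<le> b \<Longrightarrow> mseq \<omega> a \<le> mseq \<omega> b"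
  by (induction b) (auto simp: le_Suc_eq)

lemma Psi_bound:
  fixes \<omega> :: "'d::finite \<Rightarrow> real"
  assumes "CARD('d) \<ge> 2" "bryuno \<omega>" "cutoff chi" "1 \<le> n" "n \<le> k'"
    and "Psi chi \<omega> k' x \<noteq> 0"
  shows "\<bar>x\<bar> < alpha \<omega> (mseq \<omega> n - 1) / 2"
proof -
  have apos: "\<And>m. alpha \<omega> m > 0" using assms(2) unfolding bryuno_def by blast
  have "k' \<noteq> 0" using assms(4,5) by simp
  then have "chin chi \<omega> (k' - 1) x \<noteq> 0" using assms(6) unfolding Psi_def by auto
  then have c: "chi (4 * x / alpha \<omega> (mseq \<omega> (k' - 1))) \<noteq> 0" unfolding chin_def .
  have "\<bar>4 * x / alpha \<omega> (mseq \<omega> (k' - 1))\<bar> < 1"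
  proof (rule ccontr)
    assume "\<not> ?thesis"
    then show False using c assms(3) unfolding cutoff_def by force
  qed
  moreover have "0 < alpha \<omega> (mseq \<omega> (k' - 1))" by (rule apos)
  ultimately have x1: "\<bar>x\<bar> < alpha \<omega> (mseq \<omega> (k' - 1)) / 4"
    by (simp add: abs_divide abs_mult field_simps)
  have "mseq \<omega> (n - 1) \<le> mseq \<omega> (k' - 1)" using assms(5) by (intro mseq_mono) simp
  then have x2: "alpha \<omega> (mseq \<omega> (k' - 1)) \<le> alpha \<omega> (mseq \<omega> (n - 1))" by (rule alpha_mono)
  have nS: "n = Suc (n - 1)" using assms(4) by simp
  have "mseq \<omega> n - 1 = mseq \<omega> (n - 1) + pexp \<omega> (mseq \<omega> (n - 1))"
    by (subst nS) simp
  then have "alpha \<omega> (mseq \<omega> (n - 1)) < 2 * alpha \<omega> (mseq \<omega> n - 1)"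
    using pexp_prop[OF assms(1,2), of "mseq \<omega> (n - 1)"] by simp
  then show ?thesis using x1 x2 apos by linarith
qed

theorem lemma3p4:
  fixes \<omega> :: "'d::finite \<Rightarrow> real"
    and chi :: "real \<Rightarrow> real"
    and V :: "'v set" and par :: "'v \<Rightarrow> 'v option"
    and nu :: "'v \<Rightarrow> 'd \<Rightarrow> int" and sc :: "'v \<Rightarrow> int"
  assumes "CARD('d) \<ge> 2"
    and "bryuno \<omega>"
    and "cutoff chi"
    and "labelled_tree V par nu sc"
    and "renormalised V par nu sc"
    and "\<forall>v\<in>V. sc v \<ge> 0 \<longrightarrow> Psi chi \<omega> (nat (sc v)) (dotp \<omega> (mom V par nu v)) \<noteq> 0"
  shows "\<forall>n::nat. real (Nlines V sc n)
           \<le> 2 powr (- (real (mseq \<omega> n) - 2)) * real_of_int (Kmodes V nu)"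
proof
  fix n :: nat
  define M where "M = mom V par nu"
  have momnz: "M v \<noteq> (\<lambda>_. 0)" if "v \<in> V" "0 \<le> sc v" for v
    using assms(4) that unfolding labelled_tree_def M_def by force
  have Knn: "0 \<le> real_of_int (Kmodes V nu)"
    unfolding Kmodes_def by (simp add: sum_nonneg norm1_ge)
  show "real (Nlines V sc n) \<le> 2 powr (- (real (mseq \<omega> n) - 2)) * real_of_int (Kmodes V nu)"
  proof (cases "n = 0")
    case True
    interpret bt V par nu sc "int n" "1/2"
    proof
      show "labelled_tree V par nu sc" "renormalised V par nu sc" using assms(4,5) by auto
      show "(0::real) < 1/2" by simp
      show "\<forall>v\<in>V. int n \<le> sc v \<longrightarrow> 1/2 < real_of_int (norm1 (mom V par nu v))"
      proof (intro ballI impI)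
        fix v assume "v \<in> V" "int n \<le> sc v"
        then have "1 \<le> norm1 (M v)" using momnz True by (intro norm1_pos) auto
        then show "1/2 < real_of_int (norm1 (mom V par nu v))" unfolding M_def by simp
      qed
      show "\<forall>v\<in>V. \<forall>w\<in>V. int n \<le> sc v \<longrightarrow> int n \<le> sc w \<longrightarrow> mom V par nu v \<noteq> mom V par nu w
              \<longrightarrow> 1/2 < real_of_int (norm1 (\<lambda>i. mom V par nu v i - mom V par nu w i))"
      proof (intro ballI impI)
        fix v w assume "mom V par nu v \<noteq> mom V par nu w"
        then have "(\<lambda>i. mom V par nu v i - mom V par nu w i) \<noteq> (\<lambda>_. 0)"
          by (metis (no_types) eq_iff_diff_eq_0 ext)
        then have "1 \<le> norm1 (\<lambda>i. mom V par nu v i - mom V par nu w i)" by (rule norm1_pos)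
        then show "1/2 < real_of_int (norm1 (\<lambda>i. mom V par nu v i - mom V par nu w i))" by simp
      qed
    qed
    have "1/2 * real (card {v\<in>V. int n \<le> sc v}) \<le> 2 * real_of_int (Kmodes V nu)" by (rule final)
    then show ?thesis using True unfolding Nlines_def by simp
  next
    case False
    then have n1: "1 \<le> n" by simp
    define Mx where "Mx = mseq \<omega> n - 1"
    define A where "A = alpha \<omega> Mx"
    have small: "\<bar>dotp \<omega> (M v)\<bar> < A / 2" if "v \<in> V" "int n \<le> sc v" for v
    proof -
      have "n \<le> nat (sc v)" using that by simp
      moreover have "Psi chi \<omega> (nat (sc v)) (dotp \<omega> (M v)) \<noteq> 0"
        using assms(6) that unfolding M_def by auto
      ultimately show ?thesis unfolding A_def Mx_def
        by (intro Psi_bound[OF assms(1,2,3) n1]) auto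
    qed
    interpret bt V par nu sc "int n" "2 ^ Mx"
    proof
      show "labelled_tree V par nu sc" "renormalised V par nu sc" using assms(4,5) by auto
      show "(0::real) < 2 ^ Mx" by simp
      show "\<forall>v\<in>V. int n \<le> sc v \<longrightarrow> 2 ^ Mx < real_of_int (norm1 (mom V par nu v))"
      proof (intro ballI impI)
        fix v assume v: "v \<in> V" "int n \<le> sc v"
        have "M v \<noteq> (\<lambda>_. 0)" using momnz v by auto
        moreover have "\<bar>dotp \<omega> (M v)\<bar> < alpha \<omega> Mx"
          using small[OF v] assms(2) unfolding A_def bryuno_def by force
        ultimately have "2 ^ Mx < norm1 (M v)" by (rule norm1_big)
        then show "2 ^ Mx < real_of_int (norm1 (mom V par nu v))" unfolding M_def
          by (metis of_int_less_iff of_int_numeral of_int_power)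
      qed
      show "\<forall>v\<in>V. \<forall>w\<in>V. int n \<le> sc v \<longrightarrow> int n \<le> sc w \<longrightarrow> mom V par nu v \<noteq> mom V par nu w
              \<longrightarrow> 2 ^ Mx < real_of_int (norm1 (\<lambda>i. mom V par nu v i - mom V par nu w i))"
      proof (intro ballI impI)
        fix v w assume v: "v \<in> V" "w \<in> V" "int n \<le> sc v" "int n \<le> sc w"
          and ne: "mom V par nu v \<noteq> mom V par nu w"
        then have "(\<lambda>i. mom V par nu v i - mom V par nu w i) \<noteq> (\<lambda>_. 0)"
          by (metis (no_types) eq_iff_diff_eq_0 ext)
        moreover have "\<bar>dotp \<omega> (\<lambda>i. mom V par nu v i - mom V par nu w i)\<bar> < alpha \<omega> Mx"
        proof -
          have "\<bar>dotp \<omega> (\<lambda>i. mom V par nu v i - mom V par nu w i)\<bar>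
              = \<bar>dotp \<omega> (M v) - dotp \<omega> (M w)\<bar>" unfolding M_def by (simp add: dotp_diff)
          also have "\<dots> < A" using small[OF v(1,3)] small[OF v(2,4)] by linarith
          finally show ?thesis unfolding A_def .
        qed
        ultimately have "2 ^ Mx < norm1 (\<lambda>i. mom V par nu v i - mom V par nu w i)" by (rule norm1_big)
        then show "2 ^ Mx < real_of_int (norm1 (\<lambda>i. mom V par nu v i - mom V par nu w i))"
          by (metis of_int_less_iff of_int_numeral of_int_power)
      qed
    qed
    have fin: "2 ^ Mx * real (card {v\<in>V. int n \<le> sc v}) \<le> 2 * real_of_int (Kmodes V nu)" by (rule final)
    have m1: "1 \<le> mseq \<omega> n" using n1 by (cases n) auto
    have "2 powr (- (real (mseq \<omega> n) - 2)) = 2 powr (1 - real Mx)"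
      unfolding Mx_def using m1 by (simp add: of_nat_diff)
    also have "\<dots> = 2 / 2 ^ Mx" by (simp add: powr_diff powr_realpow)
    finally have p: "2 powr (- (real (mseq \<omega> n) - 2)) = 2 / 2 ^ Mx" .
    have "real (card {v\<in>V. int n \<le> sc v}) \<le> 2 * real_of_int (Kmodes V nu) / 2 ^ Mx"
      using fin by (simp add: field_simps)
    then show ?thesis unfolding Nlines_def p by simp
  qed
qed


end
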